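(* There is an absolute constant $c\ge1$ such that for all $x\in\mathbb R$ and all $t\in[x-\tfrac12 d(x),\,x+\tfrac12 d(x)]$: $$c^{-1}v(x)\le v(t)\le c\,v(x),\qquad c^{-1}u(x)\le u(t)\le c\,u(x).$$
   Context: Let $q:\mathbb R\to\mathbb R$ be measurable with $q\in L_1^{\mathrm{loc}}(\mathbb R)$ and $q(x)\ge1$ a.e. A principal fundamental system of solutions (PFSS) of $z''=q(x)z$ is a pair $u,v$ of solutions ($C^1$, derivative locally absolutely continuous, equation a.e.) such that for all $x$: $u>0$, $v>0$, $u'<0$, $v'>0$, $v'u-u'v=1$, $u(x)=v(x)\int_x^\infty v(t)^{-2}dt$, and $u,u'\to0$ as $x\to\infty$, $v,v'\to0$ as $x\to-\infty$, $v,v'\to\infty$ as $x\to\infty$, $u,|u'|\to\infty$ as $x\to-\infty$. Fix a PFSS $\{u,v\}$. For each $x\in\mathbb R$, $d(x)$ denotes the unique positive solution $d$ of $d\int_{x-d}^{x+d}q(t)\,dt=2$. *)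

theory Defs
  imports "HOL-Analysis.Analysis"
begin

definition abs_cont_on :: "real \<Rightarrow> real \<Rightarrow> (real \<Rightarrow> real) \<Rightarrow> bool" where
  "abs_cont_on a b f \<longleftrightarrow>
     (\<forall>e>0. \<exists>\<delta>>0. \<forall>(n::nat) (l::nat \<Rightarrow> real) (r::nat \<Rightarrow> real).
        (\<forall>i<n. a \<le> l i \<and> l i \<le> r i \<and> r i \<le> b) \<and>
        (\<forall>i<n. \<forall>j<n. i \<noteq> j \<longrightarrow> r i \<le> l j \<or> r j \<le> l i) \<and>
        (\<Sum>i<n. r i - l i) < \<delta>
        \<longrightarrow> (\<Sum>i<n. \<bar>f (r i) - f (l i)\<bar>) < e)"

definition loc_abs_cont :: "(real \<Rightarrow> real) \<Rightarrow> bool" where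
  "loc_abs_cont f \<longleftrightarrow> (\<forall>a b. a \<le> b \<longrightarrow> abs_cont_on a b f)"

definition admissible_q :: "(real \<Rightarrow> real) \<Rightarrow> bool" where
  "admissible_q q \<longleftrightarrow>
     q \<in> borel_measurable lborel \<and>
     (\<forall>a b. set_integrable lborel {a..b} q) \<and>
     (AE x in lborel. q x \<ge> 1)"

definition is_solution :: "(real \<Rightarrow> real) \<Rightarrow> (real \<Rightarrow> real) \<Rightarrow> (real \<Rightarrow> real) \<Rightarrow> bool" where
  "is_solution q z z' \<longleftrightarrow>
     (\<forall>x. (z has_real_derivative z' x) (at x)) \<and>
     continuous_on UNIV z' \<and>
     loc_abs_cont z' \<and>
     (AE x in lborel. (z' has_real_derivative q x * z x) (at x))"

definition is_PFSS :: "(real \<Rightarrow> real) \<Rightarrow> (real \<Rightarrow> real) \<Rightarrow> (real \<Rightarrow> real)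
    \<Rightarrow> (real \<Rightarrow> real) \<Rightarrow> (real \<Rightarrow> real) \<Rightarrow> bool" where
  "is_PFSS q u u' v v' \<longleftrightarrow>
     is_solution q u u' \<and> is_solution q v v' \<and>
     (\<forall>x. u x > 0 \<and> v x > 0 \<and> u' x < 0 \<and> v' x > 0 \<and>
          v' x * u x - u' x * v x = 1 \<and>
          (\<lambda>t. 1 / (v t)^2) integrable_on {x..} \<and>
          u x = v x * integral {x..} (\<lambda>t. 1 / (v t)^2)) \<and>
     (u \<longlongrightarrow> 0) at_top \<and> (u' \<longlongrightarrow> 0) at_top \<and>
     (v \<longlongrightarrow> 0) at_bot \<and> (v' \<longlongrightarrow> 0) at_bot \<and>
     filterlim v at_top at_top \<and> filterlim v' at_top at_top \<and>
     filterlim u at_top at_bot \<and> filterlim (\<lambda>x. \<bar>u' x\<bar>) at_top at_bot"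

definition dfun :: "(real \<Rightarrow> real) \<Rightarrow> real \<Rightarrow> real" where
  "dfun q x = (THE d. d > 0 \<and> d * integral {x - d..x + d} q = 2)"

end

theory Submission
  imports Defs
begin


lemma ac_finite_index:
  assumes ac: "abs_cont_on a b f" and e: "e > 0"
  obtains \<eta> where "\<eta> > 0" "\<And>(I::'i set) l r. finite I \<Longrightarrow> (\<forall>i\<in>I. a \<le> l i \<and> l i \<le> r i \<and> r i \<le> b) \<Longrightarrow>
      (\<forall>i\<in>I. \<forall>j\<in>I. i \<noteq> j \<longrightarrow> r i \<le> l j \<or> r j \<le> l i) \<Longrightarrow> (\<Sum>i\<in>I. r i - l i) < \<eta> \<Longrightarrow>
      (\<Sum>i\<in>I. \<bar>f (r i) - f (l i)\<bar>) < e"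
proof -
  obtain \<eta> where \<eta>H: "\<eta> > 0 \<and> (\<forall>(n::nat) (l::nat\<Rightarrow>real) (r::nat\<Rightarrow>real). (\<forall>i<n. a \<le> l i \<and> l i \<le> r i \<and> r i \<le> b) \<and>
        (\<forall>i<n. \<forall>j<n. i \<noteq> j \<longrightarrow> r i \<le> l j \<or> r j \<le> l i) \<and>
        (\<Sum>i<n. r i - l i) < \<eta>
        \<longrightarrow> (\<Sum>i<n. \<bar>f (r i) - f (l i)\<bar>) < e)"
    using ac[unfolded abs_cont_on_def, rule_format, OF e] by (elim exE) (erule that)
  note \<eta> = conjunct1[OF \<eta>H] and H = conjunct2[OF \<eta>H]
  show ?thesis
  proof (rule that[OF \<eta>])
    fix I :: "'i set" and l r
    assume fin: "finite I" and c1: "\<forall>i\<in>I. a \<le> l i \<and> l i \<le> r i \<and> r i \<le> b"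
      and c2: "\<forall>i\<in>I. \<forall>j\<in>I. i \<noteq> j \<longrightarrow> r i \<le> l j \<or> r j \<le> l i"
      and c3: "(\<Sum>i\<in>I. r i - l i) < \<eta>"
    obtain h where h: "bij_betw h {0..<card I} I" using ex_bij_betw_nat_finite[OF fin] by blast
    have hl: "bij_betw h {..<card I} I" using h by (simp add: atLeast0LessThan)
    have inI: "\<And>i. i < card I \<Longrightarrow> h i \<in> I" using hl bij_betwE by blast
    have injh: "\<And>i j. i < card I \<Longrightarrow> j < card I \<Longrightarrow> i \<noteq> j \<Longrightarrow> h i \<noteq> h j"
      using hl unfolding bij_betw_def inj_on_def by blast
    have s1: "(\<Sum>i<card I. r (h i) - l (h i)) = (\<Sum>i\<in>I. r i - l i)"
      using sum.reindex_bij_betw[OF hl, of "\<lambda>i. r i - l i"] by simp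
    have s2: "(\<Sum>i<card I. \<bar>f (r (h i)) - f (l (h i))\<bar>) = (\<Sum>i\<in>I. \<bar>f (r i) - f (l i)\<bar>)"
      using sum.reindex_bij_betw[OF hl, of "\<lambda>i. \<bar>f (r i) - f (l i)\<bar>"] by simp
    have "(\<Sum>i<card I. \<bar>f ((r \<circ> h) i) - f ((l \<circ> h) i)\<bar>) < e"
      apply (rule H[rule_format])
      using c1 c2 c3 inI injh s1 by auto
    then show "(\<Sum>i\<in>I. \<bar>f (r i) - f (l i)\<bar>) < e" using s2 by simp
  qed
qed


lemma tagged_elem_real:
  assumes D: "D tagged_division_of {a..b::real}" and xK: "(x,K) \<in> D"
  obtains c d where "K = {c..d}" "c \<le> x" "x \<le> d" "a \<le> c" "d \<le> b" "Inf K = c" "Sup K = d"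
    "measure lborel K = d - c" "interior K = {c<..<d}"
proof -
  obtain c d where K: "K = cbox c d" using tagged_division_ofD(4)[OF D xK] by blast
  have xin: "x \<in> K" using tagged_division_ofD(2)[OF D xK] .
  have sub: "K \<subseteq> {a..b}" using tagged_division_ofD(3)[OF D xK] .
  have cd: "c \<le> x" "x \<le> d" using xin K by auto
  then have "a \<le> c" "d \<le> b" using sub K by auto
  then show ?thesis using that[of c d] K cd by auto
qed

lemma open_Int_disj:
  fixes c1 d1 c2 d2 :: real
  assumes "c1 < d1" "c2 < d2" "{c1<..<d1} \<inter> {c2<..<d2} = {}"
  shows "d1 \<le> c2 \<or> d2 \<le> c1"
proof (rule ccontr)
  assume "\<not> ?thesis"
  then have "max c1 c2 < min d1 d2" using assms by auto
  then have "(max c1 c2 + min d1 d2)/2 \<in> {c1<..<d1} \<inter> {c2<..<d2}" by auto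
  with assms show False by blast
qed

lemma negligible_open_cover:
  assumes N: "negligible N" and eta: "\<eta> > 0"
  obtains T where "open T" "N \<subseteq> T" "T \<in> lmeasurable" "measure lebesgue T < \<eta>"
proof -
  have Ns: "N \<in> sets lebesgue" using N negligible_iff_null_sets by blast
  obtain T where T: "open T" "N \<subseteq> T" "(T - N) \<in> lmeasurable" "emeasure lebesgue (T - N) < ennreal \<eta>"
    using sets_lebesgue_outer_open[OF Ns eta] by blast
  have Nm: "N \<in> lmeasurable" "measure lebesgue N = 0" using N negligible_iff_measure by auto
  have TU': "(T - N) \<union> N = T" using T(2) by blast
  have Tm: "T \<in> lmeasurable" using fmeasurable.Un[OF T(3) Nm(1)] unfolding TU' .
  have "ennreal (measure lebesgue (T - N)) < ennreal \<eta>" using T(4) emeasure_eq_measure2[OF T(3)] by simp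
  then have "measure lebesgue (T - N) < \<eta>" by (simp add: ennreal_less_iff)
  moreover have "measure lebesgue T \<le> measure lebesgue (T - N) + measure lebesgue N"
    using measure_Un_le[OF fmeasurableD[OF T(3)] fmeasurableD[OF Nm(1)]] unfolding TU' .
  ultimately have "measure lebesgue T < \<eta>" using Nm by simp
  then show ?thesis using that T Tm by blast
qed


lemma ftc_ac:
  fixes f g :: "real \<Rightarrow> real"
  assumes ab: "a \<le> b" and ac: "abs_cont_on a b f" and N: "negligible N"
    and der: "\<And>t. t \<in> {a..b} \<Longrightarrow> t \<notin> N \<Longrightarrow> (f has_real_derivative g t) (at t)"
  shows "((\<lambda>t. if t \<in> N then 0 else g t) has_integral (f b - f a)) {a..b}"
  unfolding has_integral_real
proof (intro allI impI)
  fix e :: real assume e: "e > 0"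
  define h where "h = (\<lambda>t. if t \<in> N then 0 else g t)"
  obtain \<eta> where eta: "\<eta> > 0" and acI: "\<And>(I::(real \<times> real set) set) l r. finite I \<Longrightarrow> (\<forall>i\<in>I. a \<le> l i \<and> l i \<le> r i \<and> r i \<le> b) \<Longrightarrow>
      (\<forall>i\<in>I. \<forall>j\<in>I. i \<noteq> j \<longrightarrow> r i \<le> l j \<or> r j \<le> l i) \<Longrightarrow> (\<Sum>i\<in>I. r i - l i) < \<eta> \<Longrightarrow>
      (\<Sum>i\<in>I. \<bar>f (r i) - f (l i)\<bar>) < e/2"
    by (rule ac_finite_index[OF ac half_gt_zero[OF e]]) (erule that)
  obtain T where T: "open T" "N \<subseteq> T" "T \<in> lmeasurable" "measure lebesgue T < \<eta>"
    using negligible_open_cover[OF N eta] by blast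
  define \<epsilon> where "\<epsilon> = e / (4 * (b - a + 1))"
  have epos: "\<epsilon> > 0" using e ab by (simp add: \<epsilon>_def)
  have "\<forall>t. \<exists>\<delta>>0. (t \<in> N \<longrightarrow> ball t \<delta> \<subseteq> T) \<and>
          (t \<in> {a..b} \<and> t \<notin> N \<longrightarrow> (\<forall>y. \<bar>y - t\<bar> < \<delta> \<longrightarrow> \<bar>f y - f t - g t * (y - t)\<bar> \<le> \<epsilon> * \<bar>y - t\<bar>))"
  proof
    fix t
    show "\<exists>\<delta>>0. (t \<in> N \<longrightarrow> ball t \<delta> \<subseteq> T) \<and>
          (t \<in> {a..b} \<and> t \<notin> N \<longrightarrow> (\<forall>y. \<bar>y - t\<bar> < \<delta> \<longrightarrow> \<bar>f y - f t - g t * (y - t)\<bar> \<le> \<epsilon> * \<bar>y - t\<bar>))"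
    proof (cases "t \<in> N")
      case True
      then obtain \<delta> where "\<delta> > 0" "ball t \<delta> \<subseteq> T" using T(1,2) openE by blast
      then show ?thesis using True by blast
    next
      case False
      show ?thesis
      proof (cases "t \<in> {a..b}")
        case True
        have "(f has_derivative (\<lambda>y. g t * y)) (at t)"
          using der[OF True False] unfolding has_field_derivative_def .
        then obtain \<delta> where "\<delta> > 0" "\<forall>y. norm (y - t) < \<delta> \<longrightarrow> norm (f y - f t - g t * (y - t)) \<le> \<epsilon> * norm (y - t)"
          unfolding has_derivative_at_alt using epos by blast
        then show ?thesis using False by auto
      next
        case False2: False
        show ?thesis using False False2 by (intro exI[of _ 1]) auto
      qed
    qed
  qed
  from choice[OF this] obtain \<delta> where \<delta>all: "\<forall>t. \<delta> t > 0 \<and> (t \<in> N \<longrightarrow> ball t (\<delta> t) \<subseteq> T) \<and>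
          (t \<in> {a..b} \<and> t \<notin> N \<longrightarrow> (\<forall>y. \<bar>y - t\<bar> < \<delta> t \<longrightarrow> \<bar>f y - f t - g t * (y - t)\<bar> \<le> \<epsilon> * \<bar>y - t\<bar>))"
    by (elim exE) (erule that)
  have \<delta>pos: "\<And>t. \<delta> t > 0" using \<delta>all by blast
  have \<delta>N: "\<And>t. t \<in> N \<Longrightarrow> ball t (\<delta> t) \<subseteq> T" using \<delta>all by blast
  have \<delta>D: "\<And>t y. t \<in> {a..b} \<Longrightarrow> t \<notin> N \<Longrightarrow> \<bar>y - t\<bar> < \<delta> t \<Longrightarrow> \<bar>f y - f t - g t * (y - t)\<bar> \<le> \<epsilon> * \<bar>y - t\<bar>"
    using \<delta>all by blast
  show "\<exists>\<gamma>. gauge \<gamma> \<and> (\<forall>\<D>. \<D> tagged_division_of {a..b} \<and> \<gamma> fine \<D> \<longrightarrow>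
        norm ((\<Sum>(x,k)\<in>\<D>. measure lborel k *\<^sub>R (if x \<in> N then 0 else g x)) - (f b - f a)) < e)"
  proof (intro exI conjI allI impI)
    show "gauge (\<lambda>t. ball t (\<delta> t))" using \<delta>pos gauge_ball_dependent by blast
    fix D assume "D tagged_division_of {a..b} \<and> (\<lambda>t. ball t (\<delta> t)) fine D"
    then have D: "D tagged_division_of {a..b}" and fine: "(\<lambda>t. ball t (\<delta> t)) fine D" by auto
    have finD: "finite D" using D by blast
    have fineD: "\<And>x K. (x,K) \<in> D \<Longrightarrow> K \<subseteq> ball x (\<delta> x)" using fine unfolding fine_def by blast
    define \<phi> where "\<phi> = (\<lambda>(x,K). measure lborel K * h x - (f (Sup K) - f (Inf K)))"
    have eq1: "(\<Sum>(x,k)\<in>D. measure lborel k *\<^sub>R (if x \<in> N then 0 else g x)) - (f b - f a) = sum \<phi> D"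
      unfolding additive_tagged_division_1[OF ab D, symmetric, of f] \<phi>_def h_def
      by (simp add: sum_subtractf[symmetric] split_def)
    define D1 where "D1 = {p\<in>D. fst p \<notin> N}"
    define D2 where "D2 = {p\<in>D. fst p \<in> N}"
    have DU: "D = D1 \<union> D2" "D1 \<inter> D2 = {}" "finite D1" "finite D2"
      using finD unfolding D1_def D2_def by auto
    have sD: "sum \<phi> D = sum \<phi> D1 + sum \<phi> D2"
      unfolding DU(1) by (rule sum.union_disjoint[OF DU(3) DU(4) DU(2)])
    have p1: "\<bar>\<phi> p\<bar> \<le> \<epsilon> * measure lborel (snd p)" if pD: "p \<in> D1" for p
    proof -
      obtain x K where p: "p = (x,K)" by (cases p)
      have xK: "(x,K) \<in> D" and xN: "x \<notin> N" using pD p unfolding D1_def by auto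
      obtain c d where cd: "K = {c..d}" "c \<le> x" "x \<le> d" "a \<le> c" "d \<le> b" "Inf K = c" "Sup K = d"
          "measure lborel K = d - c" "interior K = {c<..<d}"
        by (rule tagged_elem_real[OF D xK])
      have xab: "x \<in> {a..b}" using cd by auto
      have "c \<in> K" "d \<in> K" using cd by auto
      then have "c \<in> ball x (\<delta> x)" "d \<in> ball x (\<delta> x)" using fineD[OF xK] by auto
      then have "\<bar>c - x\<bar> < \<delta> x" "\<bar>d - x\<bar> < \<delta> x" by (auto simp: dist_real_def)
      from \<delta>D[OF xab xN this(1)] \<delta>D[OF xab xN this(2)]
      have A: "\<bar>f c - f x - g x * (c - x)\<bar> \<le> \<epsilon> * \<bar>c - x\<bar>" "\<bar>f d - f x - g x * (d - x)\<bar> \<le> \<epsilon> * \<bar>d - x\<bar>" .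
      have "\<phi> p = (f c - f x - g x * (c - x)) - (f d - f x - g x * (d - x))"
        using cd xN unfolding \<phi>_def h_def p by (simp add: algebra_simps)
      then have "\<bar>\<phi> p\<bar> \<le> \<epsilon> * \<bar>c - x\<bar> + \<epsilon> * \<bar>d - x\<bar>" using A by linarith
      also have "\<dots> = \<epsilon> * measure lborel K" using cd by (simp add: algebra_simps)
      finally show ?thesis using p by simp
    qed
    have "\<bar>sum \<phi> D1\<bar> \<le> (\<Sum>p\<in>D1. \<epsilon> * measure lborel (snd p))"
      by (rule order_trans[OF sum_abs sum_mono[OF p1]])
    also have "\<dots> \<le> (\<Sum>p\<in>D. \<epsilon> * measure lborel (snd p))"
      using DU epos by (intro sum_mono2) auto
    also have "\<dots> = \<epsilon> * (b - a)"
      using additive_content_tagged_division[of D a b] D ab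
      by (simp add: sum_distrib_left[symmetric] split_def)
    also have "\<dots> < e / 4"
      using e ab unfolding \<epsilon>_def by (simp add: field_simps)
    finally have part1: "\<bar>sum \<phi> D1\<bar> < e/4" .
    define D3 where "D3 = {p\<in>D2. measure lborel (snd p) > 0}"
    have finD3: "finite D3" using DU unfolding D3_def by auto
    have z: "\<phi> p = 0" if "p \<in> D2 - D3" for p
    proof -
      obtain x K where p: "p = (x,K)" by (cases p)
      have xK: "(x,K) \<in> D" and xN: "x \<in> N" and c0: "measure lborel K \<le> 0" using that p unfolding D2_def D3_def by auto
      obtain c d where cd: "K = {c..d}" "c \<le> x" "x \<le> d" "a \<le> c" "d \<le> b" "Inf K = c" "Sup K = d"
          "measure lborel K = d - c" "interior K = {c<..<d}"
        by (rule tagged_elem_real[OF D xK])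
      then have "c = d" using c0 by auto
      then show ?thesis using cd xN unfolding \<phi>_def h_def p by simp
    qed
    have sD2: "sum \<phi> D2 = sum \<phi> D3"
      using z DU(4) unfolding D3_def by (intro sum.mono_neutral_right) auto
    have phi3: "\<phi> p = - (f (Sup (snd p)) - f (Inf (snd p)))" if "p \<in> D3" for p
      using that unfolding D3_def D2_def \<phi>_def h_def by (auto simp: split_def)
    have elem3: "\<exists>x c d. p = (x, {c..d}) \<and> c < d \<and> a \<le> c \<and> d \<le> b \<and> Inf (snd p) = c \<and> Sup (snd p) = d
         \<and> measure lborel (snd p) = d - c \<and> interior (snd p) = {c<..<d} \<and> snd p \<subseteq> T" if "p \<in> D3" for p
    proof -
      obtain x K where p: "p = (x,K)" by (cases p)
      have xK: "(x,K) \<in> D" and xN: "x \<in> N" and c0: "measure lborel K > 0" using that p unfolding D2_def D3_def by auto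
      obtain c d where cd: "K = {c..d}" "c \<le> x" "x \<le> d" "a \<le> c" "d \<le> b" "Inf K = c" "Sup K = d"
          "measure lborel K = d - c" "interior K = {c<..<d}"
        by (rule tagged_elem_real[OF D xK])
      have "K \<subseteq> T" using fineD[OF xK] \<delta>N[OF xN] by blast
      then show ?thesis using cd c0 p by (intro exI[of _ x] exI[of _ c] exI[of _ d]) auto
    qed
    have disj3: "interior (snd p) \<inter> interior (snd q) = {}" if "p \<in> D3" "q \<in> D3" "p \<noteq> q" for p q
    proof -
      have pq: "(fst p, snd p) \<in> D" "(fst q, snd q) \<in> D" "(fst p, snd p) \<noteq> (fst q, snd q)"
        using that unfolding D3_def D2_def by auto
      show ?thesis using tagged_division_ofD(5)[OF D pq] .
    qed
    have lensum: "(\<Sum>p\<in>D3. Sup (snd p) - Inf (snd p)) < \<eta>"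
    proof -
      have "(\<Sum>p\<in>D3. Sup (snd p) - Inf (snd p)) = (\<Sum>p\<in>D3. measure lebesgue (interior (snd p)))"
      proof (rule sum.cong[OF refl])
        fix p assume "p \<in> D3"
        from elem3[OF this] obtain x c d where "p = (x, {c..d})" "c < d" "Inf (snd p) = c" "Sup (snd p) = d"
          "interior (snd p) = {c<..<d}" by blast
        then show "Sup (snd p) - Inf (snd p) = measure lebesgue (interior (snd p))" by simp
      qed
      also have "\<dots> = measure lebesgue (\<Union>p\<in>D3. interior (snd p))"
      proof (rule measure_negligible_finite_Union_image[symmetric, OF finD3])
        show "\<And>p. p \<in> D3 \<Longrightarrow> interior (snd p) \<in> lmeasurable"
          using elem3 by fastforce
        show "pairwise (\<lambda>p q. negligible (interior (snd p) \<inter> interior (snd q))) D3"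
          unfolding pairwise_def using disj3 by simp
      qed
      also have "\<dots> \<le> measure lebesgue T"
      proof (rule measure_mono_fmeasurable)
        show "(\<Union>p\<in>D3. interior (snd p)) \<subseteq> T" using elem3 interior_subset by blast
        show "(\<Union>p\<in>D3. interior (snd p)) \<in> sets lebesgue"
          using elem3 finD3 by (intro sets.finite_UN) fastforce+
        show "T \<in> lmeasurable" using T by simp
      qed
      finally show ?thesis using T by linarith
    qed
    have "(\<Sum>p\<in>D3. \<bar>f (Sup (snd p)) - f (Inf (snd p))\<bar>) < e/2"
    proof (rule acI[OF finD3])
      show "\<forall>i\<in>D3. a \<le> Inf (snd i) \<and> Inf (snd i) \<le> Sup (snd i) \<and> Sup (snd i) \<le> b"
        using elem3 by fastforce
      show "\<forall>i\<in>D3. \<forall>j\<in>D3. i \<noteq> j \<longrightarrow> Sup (snd i) \<le> Inf (snd j) \<or> Sup (snd j) \<le> Inf (snd i)"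
      proof (intro ballI impI)
        fix i j assume ij: "i \<in> D3" "j \<in> D3" "i \<noteq> j"
        from elem3[OF ij(1)] obtain x1 c1 d1 where 1: "c1 < d1" "Inf (snd i) = c1" "Sup (snd i) = d1"
          "interior (snd i) = {c1<..<d1}" by blast
        from elem3[OF ij(2)] obtain x2 c2 d2 where 2: "c2 < d2" "Inf (snd j) = c2" "Sup (snd j) = d2"
          "interior (snd j) = {c2<..<d2}" by blast
        show "Sup (snd i) \<le> Inf (snd j) \<or> Sup (snd j) \<le> Inf (snd i)"
          using open_Int_disj[OF 1(1) 2(1)] disj3[OF ij] 1 2 by auto
      qed
      show "(\<Sum>i\<in>D3. Sup (snd i) - Inf (snd i)) < \<eta>" by (rule lensum)
    qed
    moreover have "\<bar>sum \<phi> D3\<bar> \<le> (\<Sum>p\<in>D3. \<bar>f (Sup (snd p)) - f (Inf (snd p))\<bar>)"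
      using sum_abs[of \<phi> D3] phi3 by (simp add: abs_minus_commute)
    ultimately have part2: "\<bar>sum \<phi> D2\<bar> < e/2" using sD2 by linarith
    show "norm ((\<Sum>(x,k)\<in>D. measure lborel k *\<^sub>R (if x \<in> N then 0 else g x)) - (f b - f a)) < e"
      unfolding eq1 real_norm_def sD using part1 part2 by linarith
  qed
qed


lemma AE_negligible:
  assumes "AE x in lborel. P x"
  obtains N :: "real set" where "negligible N" "\<And>x. x \<notin> N \<Longrightarrow> P x"
proof -
  from assms obtain N where N: "{x \<in> space lborel. \<not> P x} \<subseteq> N" "emeasure lborel N = 0" "N \<in> sets lborel"
    by (rule AE_E)
  have "N \<in> null_sets lborel" using N by auto
  then have "N \<in> null_sets lebesgue" by (rule null_sets_completionI)
  then have "negligible N" using negligible_iff_null_sets by blast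
  moreover have "\<And>x. x \<notin> N \<Longrightarrow> P x" using N(1) by auto
  ultimately show ?thesis using that by blast
qed

lemma adm_facts:
  assumes adm: "admissible_q q"
  shows adm_int: "q integrable_on {a..b}"
    and adm_lower: "a \<le> b \<Longrightarrow> b - a \<le> integral {a..b} q"
    and adm_mono: "{a..b} \<subseteq> {c..d} \<Longrightarrow> integral {a..b} q \<le> integral {c..d} q"
proof -
  have si: "\<And>a b. set_integrable lborel {a..b} q" using adm unfolding admissible_q_def by blast
  show qi: "\<And>a b. q integrable_on {a..b}" using set_borel_integral_eq_integral(1)[OF si] .
  have "AE x in lborel. q x \<ge> 1" using adm unfolding admissible_q_def by blast
  then obtain N where N: "negligible N" "\<And>x. x \<notin> N \<Longrightarrow> 1 \<le> q x" by (rule AE_negligible) (erule that)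
  define qq where "qq = (\<lambda>t. if t \<in> N then 1 else q t)"
  have qq1: "\<And>t. 1 \<le> qq t" using N unfolding qq_def by auto
  have qqI: "\<And>a b. (qq has_integral integral {a..b} q) {a..b}"
  proof -
    fix a b
    show "(qq has_integral integral {a..b} q) {a..b}"
      by (rule has_integral_spike[OF N(1) _ integrable_integral[OF qi]]) (auto simp: qq_def)
  qed
  have qqi: "\<And>a b. qq integrable_on {a..b}" using qqI by blast
  have qqe: "\<And>a b. integral {a..b} qq = integral {a..b} q" using qqI by (rule integral_unique)
  show "a \<le> b \<Longrightarrow> b - a \<le> integral {a..b} q"
  proof -
    assume ab: "a \<le> b"
    have "integral {a..b} (\<lambda>x. 1::real) \<le> integral {a..b} qq"
      by (rule integral_le) (use qqi qq1 in auto)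
    then show ?thesis using ab qqe by simp
  qed
  show "{a..b} \<subseteq> {c..d} \<Longrightarrow> integral {a..b} q \<le> integral {c..d} q"
  proof -
    assume sub: "{a..b} \<subseteq> {c..d}"
    have "integral {a..b} qq \<le> integral {c..d} qq"
      by (rule integral_subset_le[OF sub qqi qqi]) (use qq1 order_trans zero_le_one in blast)
    then show ?thesis using qqe by simp
  qed
qed

lemma sol_bound:
  assumes adm: "admissible_q q" and sol: "is_solution q z z'" and ab: "a \<le> b"
    and zb: "\<And>t. t \<in> {a..b} \<Longrightarrow> 0 < z t \<and> z t \<le> M"
  shows "z' b - z' a \<le> M * integral {a..b} q"
proof -
  have "AE x in lborel. q x \<ge> 1" using adm unfolding admissible_q_def by blast
  moreover have "AE x in lborel. (z' has_real_derivative q x * z x) (at x)"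
    using sol unfolding is_solution_def by blast
  ultimately have "AE x in lborel. q x \<ge> 1 \<and> (z' has_real_derivative q x * z x) (at x)"
    by (rule AE_conjI)
  then obtain N where N: "negligible N" "\<And>x. x \<notin> N \<Longrightarrow> q x \<ge> 1 \<and> (z' has_real_derivative q x * z x) (at x)"
    by (rule AE_negligible) (erule that)
  have ac: "abs_cont_on a b z'" using sol ab unfolding is_solution_def loc_abs_cont_def by blast
  have h: "((\<lambda>t. if t \<in> N then 0 else q t * z t) has_integral (z' b - z' a)) {a..b}"
    by (rule ftc_ac[OF ab ac N(1)]) (use N(2) in blast)
  have k0: "((\<lambda>t. M * q t) has_integral (M * integral {a..b} q)) {a..b}"
    by (rule has_integral_mult_right[OF integrable_integral[OF adm_int[OF adm]]])
  have k: "((\<lambda>t. if t \<in> N then 0 else M * q t) has_integral (M * integral {a..b} q)) {a..b}"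
    by (rule has_integral_spike[OF N(1) _ k0]) auto
  show ?thesis
  proof (rule has_integral_le[OF h k])
    fix t assume t: "t \<in> {a..b}"
    show "(if t \<in> N then 0 else q t * z t) \<le> (if t \<in> N then 0 else M * q t)"
    proof (cases "t \<in> N")
      case False
      then have "q t \<ge> 1" using N(2) by blast
      moreover have "z t \<le> M" using zb[OF t] by blast
      ultimately have "q t * z t \<le> q t * M" by (intro mult_left_mono) auto
      then show ?thesis using False by (simp add: mult.commute)
    qed simp
  qed
qed


lemma dfun_props:
  assumes adm: "admissible_q q"
  shows "dfun q x > 0 \<and> dfun q x * integral {x - dfun q x..x + dfun q x} q = 2"
proof -
  define I where "I = (\<lambda>d. integral {x - d..x + d} q)"
  have Ilow: "2 * d \<le> I d" if "d \<ge> 0" for d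
    using adm_lower[OF adm, of "x - d" "x + d"] that unfolding I_def by simp
  have Imono: "I d1 \<le> I d2" if "d1 \<le> d2" for d1 d2
    unfolding I_def by (rule adm_mono[OF adm]) (use that in auto)
  have smono: "d1 * I d1 < d2 * I d2" if "0 < d1" "d1 < d2" for d1 d2
  proof -
    have "I d1 > 0" using Ilow[of d1] that by linarith
    then have "d1 * I d1 < d2 * I d1" using that by simp
    also have "\<dots> \<le> d2 * I d2" using Imono[of d1 d2] that by (intro mult_left_mono) auto
    finally show ?thesis .
  qed
  have qi: "q integrable_on {x - 1..x + 1}" by (rule adm_int[OF adm])
  have F: "continuous_on {x - 1..x + 1} (\<lambda>y. integral {x - 1..y} q)"
    by (rule indefinite_integral_continuous_1[OF qi])
  have c1: "continuous_on {0..1} (\<lambda>d. integral {x - 1..x + d} q)"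
    by (rule continuous_on_compose2[OF F, of _ "\<lambda>d. x + d"]) (auto intro!: continuous_intros)
  have c2: "continuous_on {0..1} (\<lambda>d. integral {x - 1..x - d} q)"
    by (rule continuous_on_compose2[OF F, of _ "\<lambda>d. x - d"]) (auto intro!: continuous_intros)
  have Ieq: "I d = integral {x - 1..x + d} q - integral {x - 1..x - d} q" if "d \<in> {0..1}" for d
  proof -
    have "q integrable_on {x - 1..x + d}" by (rule adm_int[OF adm])
    from Henstock_Kurzweil_Integration.integral_combine[OF _ _ this, of "x - d"] that
    show ?thesis unfolding I_def by auto
  qed
  have cI: "continuous_on {0..1} (\<lambda>d. d * I d)"
  proof -
    have "continuous_on {0..1} (\<lambda>d. d * (integral {x - 1..x + d} q - integral {x - 1..x - d} q))"
      using c1 c2 by (intro continuous_intros)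
    then show ?thesis by (rule continuous_on_eq) (use Ieq in auto)
  qed
  have "(\<lambda>d. d * I d) 0 \<le> 2" by simp
  moreover have "2 \<le> (\<lambda>d. d * I d) 1" using Ilow[of 1] by simp
  ultimately obtain d where d: "0 \<le> d" "d \<le> 1" "d * I d = 2"
    using IVT'[of "\<lambda>d. d * I d" 0 2 1] cI by auto
  have dpos: "d > 0" using d by (cases "d = 0") auto
  have ex1: "\<exists>!d. d > 0 \<and> d * I d = 2"
  proof (rule ex1I[of _ d])
    show "d > 0 \<and> d * I d = 2" using dpos d by auto
    fix d' assume d': "d' > 0 \<and> d' * I d' = 2"
    show "d' = d"
    proof (rule ccontr)
      assume "d' \<noteq> d"
      then have "d' < d \<or> d < d'" by auto
      then show False using smono[of d' d] smono[of d d'] d' d dpos by auto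
    qed
  qed
  have "dfun q x = (THE d. d > 0 \<and> d * I d = 2)" unfolding dfun_def I_def ..
  then show ?thesis using theI'[OF ex1] unfolding I_def by simp
qed


lemma incr_bound:
  assumes adm: "admissible_q q" and sol: "is_solution q z z'"
    and pos: "\<And>s. z s > 0" and dpos: "\<And>s. z' s > 0" and h: "h > 0"
  shows "z' t0 / z t0 < 1 / h + integral {t0 - h..t0} q"
proof -
  have der: "\<And>s. (z has_real_derivative z' s) (at s)" using sol unfolding is_solution_def by blast
  have mono: "z s \<le> z t" if "s \<le> t" for s t
  proof (cases "s = t")
    case False
    then have "s < t" using that by auto
    from MVT2[OF this der] obtain \<xi> where "z t - z s = (t - s) * z' \<xi>" by blast
    moreover have "(t - s) * z' \<xi> \<ge> 0" using \<open>s < t\<close> dpos[of \<xi>] by simp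
    ultimately show ?thesis by linarith
  qed simp
  define Q where "Q = integral {t0 - h..t0} q"
  have low: "z' s \<ge> z' t0 - z t0 * Q" if "s \<in> {t0 - h..t0}" for s
  proof -
    have "z' t0 - z' s \<le> z t0 * integral {s..t0} q"
      by (rule sol_bound[OF adm sol]) (use that pos mono in auto)
    also have "\<dots> \<le> z t0 * Q"
      unfolding Q_def using that pos[of t0] by (intro mult_left_mono adm_mono[OF adm]) auto
    finally show ?thesis by linarith
  qed
  have "t0 - h < t0" using h by simp
  from MVT2[OF this der] obtain \<xi> where \<xi>: "t0 - h < \<xi>" "\<xi> < t0" "z t0 - z (t0 - h) = (t0 - (t0 - h)) * z' \<xi>"
    by blast
  have "z' \<xi> \<ge> z' t0 - z t0 * Q" using low \<xi> by auto
  then have "z t0 - z (t0 - h) \<ge> h * (z' t0 - z t0 * Q)" using \<xi>(3) h by (simp add: mult_left_mono)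
  then have "h * z' t0 < z t0 + h * z t0 * Q" using pos[of "t0 - h"] by (simp add: algebra_simps)
  then have "z' t0 < z t0 * (1 / h + Q)" using h by (simp add: field_simps)
  then show ?thesis using pos[of t0] unfolding Q_def by (simp add: field_simps)
qed

lemma decr_bound:
  assumes adm: "admissible_q q" and sol: "is_solution q z z'"
    and pos: "\<And>s. z s > 0" and dneg: "\<And>s. z' s < 0" and h: "h > 0"
  shows "- z' t0 / z t0 < 1 / h + integral {t0..t0 + h} q"
proof -
  have der: "\<And>s. (z has_real_derivative z' s) (at s)" using sol unfolding is_solution_def by blast
  have mono: "z t \<le> z s" if "s \<le> t" for s t
  proof (cases "s = t")
    case False
    then have "s < t" using that by auto
    from MVT2[OF this der] obtain \<xi> where "z t - z s = (t - s) * z' \<xi>" by blast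
    moreover have "(t - s) * z' \<xi> \<le> 0" using \<open>s < t\<close> dneg[of \<xi>] by (simp add: mult_nonneg_nonpos)
    ultimately show ?thesis by linarith
  qed simp
  define Q where "Q = integral {t0..t0 + h} q"
  have up: "z' s \<le> z' t0 + z t0 * Q" if "s \<in> {t0..t0 + h}" for s
  proof -
    have "z' s - z' t0 \<le> z t0 * integral {t0..s} q"
      by (rule sol_bound[OF adm sol]) (use that pos mono in auto)
    also have "\<dots> \<le> z t0 * Q"
      unfolding Q_def using that pos[of t0] by (intro mult_left_mono adm_mono[OF adm]) auto
    finally show ?thesis by linarith
  qed
  have "t0 < t0 + h" using h by simp
  from MVT2[OF this der] obtain \<xi> where \<xi>: "t0 < \<xi>" "\<xi> < t0 + h" "z (t0 + h) - z t0 = (t0 + h - t0) * z' \<xi>"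
    by blast
  have "z' \<xi> \<le> z' t0 + z t0 * Q" using up \<xi> by auto
  then have "z (t0 + h) - z t0 \<le> h * (z' t0 + z t0 * Q)" using \<xi>(3) h by (simp add: mult_left_mono)
  then have "- h * z' t0 < z t0 + h * z t0 * Q" using pos[of "t0 + h"] by (simp add: algebra_simps)
  then have "- z' t0 < z t0 * (1 / h + Q)" using h by (simp add: field_simps)
  then show ?thesis using pos[of t0] unfolding Q_def by (simp add: field_simps)
qed

lemma log_ratio_bound:
  fixes z z' :: "real \<Rightarrow> real"
  assumes der: "\<And>s. (z has_real_derivative z' s) (at s)" and pos: "\<And>s. z s > 0"
    and B: "\<And>s. s \<in> {min x t..max x t} \<Longrightarrow> \<bar>z' s / z s\<bar> \<le> B" and tB: "\<bar>t - x\<bar> * B \<le> 2"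
  shows "z x / exp 2 \<le> z t \<and> z t \<le> exp 2 * z x"
proof -
  have dl: "((\<lambda>s. ln (z s)) has_real_derivative z' s / z s) (at s)" for s
    using DERIV_ln_divide[OF pos[of s]] der[of s] pos[of s]
    by (auto intro!: derivative_eq_intros simp: field_simps)
  have L: "\<bar>ln (z t) - ln (z x)\<bar> \<le> 2"
  proof (cases "x = t")
    case False
    define a where "a = min x t"
    define b where "b = max x t"
    have ab: "a < b" using False unfolding a_def b_def by auto
    from MVT2[OF ab dl] obtain \<xi> where \<xi>: "a < \<xi>" "\<xi> < b" "ln (z b) - ln (z a) = (b - a) * (z' \<xi> / z \<xi>)" by blast
    have "\<bar>z' \<xi> / z \<xi>\<bar> \<le> B" using B \<xi> unfolding a_def b_def by auto
    then have Bx: "\<bar>z' \<xi> / z \<xi>\<bar> \<le> B" .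
    have "\<bar>ln (z b) - ln (z a)\<bar> = (b - a) * \<bar>z' \<xi> / z \<xi>\<bar>" unfolding \<xi>(3) abs_mult using ab by simp
    also have "\<dots> \<le> (b - a) * B" using ab Bx by (intro mult_left_mono) auto
    finally have "\<bar>ln (z b) - ln (z a)\<bar> \<le> (b - a) * B" .
    moreover have "b - a = \<bar>t - x\<bar>" unfolding a_def b_def by auto
    moreover have "\<bar>ln (z t) - ln (z x)\<bar> = \<bar>ln (z b) - ln (z a)\<bar>" unfolding a_def b_def by (cases "x \<le> t") auto
    ultimately show ?thesis using tB by simp
  qed simp
  have "z t = exp (ln (z t))" using pos by simp
  also have "\<dots> \<le> exp (ln (z x) + 2)" using L by simp
  also have "\<dots> = exp 2 * z x" using pos[of x] by (simp add: exp_add)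
  finally have up: "z t \<le> exp 2 * z x" .
  have "z x / exp 2 = exp (ln (z x) - 2)" using pos[of x] by (simp add: exp_diff)
  also have "\<dots> \<le> exp (ln (z t))" using L by simp
  also have "\<dots> = z t" using pos by simp
  finally show ?thesis using up by simp
qed

theorem lemma5p1:
  shows "\<exists>c\<ge>(1::real). \<forall>q u u' v v'. admissible_q q \<and> is_PFSS q u u' v v' \<longrightarrow>
           (\<forall>x t. t \<in> {x - dfun q x / 2 .. x + dfun q x / 2} \<longrightarrow>
              v x / c \<le> v t \<and> v t \<le> c * v x \<and> u x / c \<le> u t \<and> u t \<le> c * u x)"
proof (rule exI[of _ "exp 2"], rule conjI)
  show "1 \<le> exp (2::real)" by simp
  show "\<forall>q u u' v v'. admissible_q q \<and> is_PFSS q u u' v v' \<longrightarrow>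
           (\<forall>x t. t \<in> {x - dfun q x / 2 .. x + dfun q x / 2} \<longrightarrow>
              v x / exp 2 \<le> v t \<and> v t \<le> exp 2 * v x \<and> u x / exp 2 \<le> u t \<and> u t \<le> exp 2 * u x)"
  proof (intro allI impI)
  fix q u u' v v' x t
  assume H: "admissible_q q \<and> is_PFSS q u u' v v'" and t: "t \<in> {x - dfun q x / 2 .. x + dfun q x / 2}"
  have adm: "admissible_q q" using H by blast
  have solu: "is_solution q u u'" and solv: "is_solution q v v'"
    and P: "\<forall>s. u s > 0 \<and> v s > 0 \<and> u' s < 0 \<and> v' s > 0"
    using H unfolding is_PFSS_def by blast+
  have up: "\<And>s. u s > 0" and vp: "\<And>s. v s > 0" and u'n: "\<And>s. u' s < 0" and v'p: "\<And>s. v' s > 0"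
    using P by blast+
  define d where "d = dfun q x"
  have d: "d > 0" "d * integral {x - d..x + d} q = 2" using dfun_props[OF adm, of x] unfolding d_def by auto
  have h: "d / 2 > 0" using d by simp
  have Iv: "integral {x - d..x + d} q = 2 / d" using d by (simp add: field_simps)
  have t1: "x - d / 2 \<le> t" "t \<le> x + d / 2" using t unfolding d_def by auto
  have tx: "\<bar>t - x\<bar> \<le> d / 2" unfolding abs_le_iff using t1 by linarith
  have sx: "x - d / 2 \<le> s \<and> s \<le> x + d / 2" if "s \<in> {min x t..max x t}" for s
  proof -
    have "min x t \<le> s" "s \<le> max x t" using that by auto
    then show ?thesis using t1 d by (simp add: min_def max_def split: if_splits)
  qed
  have Bv: "\<bar>v' s / v s\<bar> \<le> 4 / d" if "s \<in> {min x t..max x t}" for s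
  proof -
    have "v' s / v s < 1 / (d/2) + integral {s - d/2..s} q"
      by (rule incr_bound[OF adm solv vp v'p h])
    also have "integral {s - d/2..s} q \<le> integral {x - d..x + d} q"
      by (rule adm_mono[OF adm]) (use sx[OF that] in auto)
    finally have "v' s / v s < 4 / d" using Iv by simp
    moreover have "v' s / v s > 0" using vp[of s] v'p[of s] by simp
    ultimately show ?thesis by simp
  qed
  have Bu: "\<bar>u' s / u s\<bar> \<le> 4 / d" if "s \<in> {min x t..max x t}" for s
  proof -
    have "- u' s / u s < 1 / (d/2) + integral {s..s + d/2} q"
      by (rule decr_bound[OF adm solu up u'n h])
    also have "integral {s..s + d/2} q \<le> integral {x - d..x + d} q"
      by (rule adm_mono[OF adm]) (use sx[OF that] in auto)
    finally have "- u' s / u s < 4 / d" using Iv by simp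
    moreover have "u' s / u s < 0" using up[of s] u'n[of s] by (simp add: divide_neg_pos)
    ultimately show ?thesis by simp
  qed
  have tB: "\<bar>t - x\<bar> * (4 / d) \<le> 2"
  proof -
    have "\<bar>t - x\<bar> * (4 / d) \<le> (d / 2) * (4 / d)" using tx d by (intro mult_right_mono) auto
    also have "\<dots> = 2" using d by simp
    finally show ?thesis .
  qed
  have derv: "\<And>s. (v has_real_derivative v' s) (at s)" using solv unfolding is_solution_def by blast
  have deru: "\<And>s. (u has_real_derivative u' s) (at s)" using solu unfolding is_solution_def by blast
  show "v x / exp 2 \<le> v t \<and> v t \<le> exp 2 * v x \<and> u x / exp 2 \<le> u t \<and> u t \<le> exp 2 * u x"
    using log_ratio_bound[OF derv vp Bv tB] log_ratio_bound[OF deru up Bu tB] by blast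
  qed
qed

end
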